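(* Let $f:\mathbb{R}^n_{>0}\to\mathbb{R}^n_{>0}$ be order-preserving and homogeneous. Then $\delta(f)=\log r(f)-\log\lambda(f)$, where $\delta(f)=\inf\{d_H(x,f(x)):x\in\mathbb{R}^n_{>0}\}$.
   Context: Entrywise order. Order-preserving: $x\le y\Rightarrow f(x)\le f(y)$; homogeneous: $f(tx)=tf(x)$ for $t>0$. $d_H(x,y)=\log\max_{i,j}\frac{y_ix_j}{x_iy_j}$. $r(f)=\inf_{x\in\mathbb{R}^n_{>0}}\max_if(x)_i/x_i$ and $\lambda(f)=\sup_{x\in\mathbb{R}^n_{>0}}\min_if(x)_i/x_i$ are the upper and lower Collatz–Wielandt numbers. *)

theory Defs
  imports "HOL-Analysis.Analysis"
begin

definition pos_cone :: "(real ^ 'n) set" where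
  "pos_cone = {x. \<forall>i. x $ i > 0}"

definition order_preserving :: "(real ^ 'n \<Rightarrow> real ^ 'n) \<Rightarrow> bool" where
  "order_preserving f \<longleftrightarrow>
     (\<forall>x\<in>pos_cone. \<forall>y\<in>pos_cone. (\<forall>i. x $ i \<le> y $ i) \<longrightarrow> (\<forall>i. f x $ i \<le> f y $ i))"

definition homogeneous :: "(real ^ 'n \<Rightarrow> real ^ 'n) \<Rightarrow> bool" where
  "homogeneous f \<longleftrightarrow> (\<forall>x\<in>pos_cone. \<forall>t::real. t > 0 \<longrightarrow> f (t *\<^sub>R x) = t *\<^sub>R f x)"

definition hilbert_dist :: "real ^ 'n \<Rightarrow> real ^ 'n \<Rightarrow> real" where
  "hilbert_dist x y = ln (Max {(y $ i * x $ j) / (x $ i * y $ j) | i j. True})"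

definition cw_upper :: "(real ^ 'n \<Rightarrow> real ^ 'n) \<Rightarrow> real" where
  "cw_upper f = Inf ((\<lambda>x. Max (range (\<lambda>i. f x $ i / x $ i))) ` pos_cone)"

definition cw_lower :: "(real ^ 'n \<Rightarrow> real ^ 'n) \<Rightarrow> real" where
  "cw_lower f = Sup ((\<lambda>x. Min (range (\<lambda>i. f x $ i / x $ i))) ` pos_cone)"

definition hilbert_disp :: "(real ^ 'n \<Rightarrow> real ^ 'n) \<Rightarrow> real" where
  "hilbert_disp f = Inf ((\<lambda>x. hilbert_dist x (f x)) ` pos_cone)"

end

theory Submission
  imports Defs
begin

lemma tarski_box:
  fixes g :: "real^'n \<Rightarrow> real^'n" and lo hi :: "real^'n"
  assumes lohi: "\<forall>i. lo$i \<le> hi$i"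
  and mono: "\<And>u v. (\<forall>i. lo$i \<le> u$i \<and> u$i \<le> hi$i) \<Longrightarrow> (\<forall>i. lo$i \<le> v$i \<and> v$i \<le> hi$i)
      \<Longrightarrow> (\<forall>i. u$i \<le> v$i) \<Longrightarrow> (\<forall>i. g u$i \<le> g v$i)"
  and into: "\<And>u. (\<forall>i. lo$i \<le> u$i \<and> u$i \<le> hi$i) \<Longrightarrow> (\<forall>i. lo$i \<le> g u$i \<and> g u$i \<le> hi$i)"
  shows "\<exists>z. (\<forall>i. lo$i \<le> z$i \<and> z$i \<le> hi$i) \<and> g z = z"
proof -
  define B where "B = {u. \<forall>i. lo$i \<le> u$i \<and> u$i \<le> hi$i}"
  define P where "P = {u\<in>B. \<forall>i. u$i \<le> g u$i}"
  define z where "z = (\<chi> i. Sup ((\<lambda>u. u$i) ` P))"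
  have loB: "lo \<in> B" using lohi by (auto simp: B_def)
  have loP: "lo \<in> P" using into[of lo] lohi by (auto simp: P_def B_def)
  have bdd: "bdd_above ((\<lambda>u. u$i) ` P)" for i
    by (rule bdd_aboveI[of _ "hi$i"]) (auto simp: P_def B_def)
  have ne: "(\<lambda>u. u$i) ` P \<noteq> {}" for i using loP by auto
  have le_z: "u$i \<le> z$i" if "u \<in> P" for u i
    unfolding z_def using bdd[of i] that by (auto intro: cSup_upper)
  have zB: "z \<in> B"
  proof -
    have "lo$i \<le> z$i" for i using le_z[OF loP] .
    moreover have "z$i \<le> hi$i" for i
      unfolding z_def using ne[of i] by (auto intro!: cSup_least simp: P_def B_def)
    ultimately show ?thesis by (auto simp: B_def)
  qed
  have z_le: "\<forall>i. z$i \<le> g z$i"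
  proof
    fix i
    have "u$i \<le> g z$i" if "u \<in> P" for u
    proof -
      have uB: "u \<in> B" and ug: "\<forall>i. u$i \<le> g u$i" using that by (auto simp: P_def)
      have "\<forall>i. g u$i \<le> g z$i"
        using mono[of u z] uB zB le_z[OF that] by (auto simp: B_def)
      then show ?thesis using ug by (meson order_trans)
    qed
    then show "z$i \<le> g z$i" unfolding z_def using ne[of i]
      by (auto intro!: cSup_least)
  qed
  have gzB: "g z \<in> B" using into[of z] zB by (auto simp: B_def)
  have "\<forall>i. g z$i \<le> g (g z)$i"
    using mono[of z "g z"] zB gzB z_le by (auto simp: B_def)
  then have "g z \<in> P" using gzB by (auto simp: P_def)
  then have "g z = z" using le_z z_le by (auto simp: vec_eq_iff intro: antisym)
  then show ?thesis using zB by (auto simp: B_def)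
qed

lemma mid_point:
  fixes f :: "real ^ 'n \<Rightarrow> real ^ 'n"
  assumes fc: "\<forall>x\<in>pos_cone. f x \<in> pos_cone"
    and op: "order_preserving f"
    and hom: "homogeneous f"
    and x: "x \<in> pos_cone" and y: "y \<in> pos_cone"
    and fx: "\<forall>i. f x $ i \<le> a * x $ i" and fy: "\<forall>i. b * y $ i \<le> f y $ i"
    and b: "0 < b" and ba: "b \<le> a"
  shows "\<exists>z\<in>pos_cone. (\<forall>i. f z $ i \<le> a * z $ i) \<and> (\<forall>i. b * z $ i \<le> f z $ i)"
proof -
  have xp: "\<And>i. x$i > 0" and yp: "\<And>i. y$i > 0" using x y by (auto simp: pos_cone_def)
  have a: "a > 0" using b ba by linarith
  define s where "s = Min (range (\<lambda>i. x$i / y$i))"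
  have fin: "finite (range (\<lambda>i. x$i / y$i))" by simp
  have "s \<in> range (\<lambda>i. x$i / y$i)" unfolding s_def by (rule Min_in[OF fin]) simp
  then obtain i0 where si0: "s = x$i0 / y$i0" by auto
  have s0: "s > 0" using si0 xp yp by simp
  have sle: "s \<le> x$i / y$i" for i unfolding s_def using fin by (auto intro: Min_le)
  define lo where "lo = s *\<^sub>R y"
  have lop: "lo $ i > 0" for i using s0 yp by (simp add: lo_def)
  have lox: "lo $ i \<le> x $ i" for i
    using sle[of i] yp[of i] by (simp add: lo_def field_simps)
  have loc: "lo \<in> pos_cone" using lop by (simp add: pos_cone_def)
  have flo: "f lo = s *\<^sub>R f y" using hom y s0 by (simp add: homogeneous_def lo_def)
  have flo_ge: "b * lo$i \<le> f lo $ i" for i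
  proof -
    have e1: "f lo $ i = s * f y $ i" using flo by simp
    have e2: "lo $ i = s * y $ i" by (simp add: lo_def)
    have "s * (b * y$i) \<le> s * f y $ i" using fy s0 by (simp add: mult_left_mono)
    then show ?thesis using e1 e2 by (simp add: mult.left_commute)
  qed
  define g where "g = (\<lambda>w. (\<chi> i. max (f w $ i / a) (min (w $ i) (f w $ i / b))) :: real^'n)"
  have boxc: "w \<in> pos_cone" if "\<forall>i. lo$i \<le> w$i \<and> w$i \<le> x$i" for w
    using that lop by (auto simp: pos_cone_def intro: less_le_trans)
  have fmono: "f u $ i \<le> f v $ i" if "\<forall>i. lo$i \<le> u$i \<and> u$i \<le> x$i"
      "\<forall>i. lo$i \<le> v$i \<and> v$i \<le> x$i" "\<forall>i. u$i \<le> v$i" for u v i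
    using op boxc[OF that(1)] boxc[OF that(2)] that(3) unfolding order_preserving_def by blast
  have "\<exists>z. (\<forall>i. lo$i \<le> z$i \<and> z$i \<le> x$i) \<and> g z = z"
  proof (rule tarski_box)
    show "\<forall>i. lo$i \<le> x$i" using lox by simp
  next
    fix u v :: "real^'n"
    assume u: "\<forall>i. lo$i \<le> u$i \<and> u$i \<le> x$i" and v: "\<forall>i. lo$i \<le> v$i \<and> v$i \<le> x$i"
      and uv: "\<forall>i. u$i \<le> v$i"
    show "\<forall>i. g u$i \<le> g v$i"
    proof
      fix i
      have 1: "f u $ i \<le> f v $ i" using fmono[OF u v uv] .
      have 2: "f u $ i / a \<le> f v $ i / a" using 1 a by (simp add: divide_right_mono)
      have 3: "f u $ i / b \<le> f v $ i / b" using 1 b by (simp add: divide_right_mono)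
      show "g u$i \<le> g v$i" using 2 3 uv[rule_format, of i] by (simp add: g_def) linarith
    qed
  next
    fix u :: "real^'n"
    assume u: "\<forall>i. lo$i \<le> u$i \<and> u$i \<le> x$i"
    show "\<forall>i. lo$i \<le> g u$i \<and> g u$i \<le> x$i"
    proof
      fix i
      have "\<forall>i. lo$i \<le> lo$i \<and> lo$i \<le> x$i" using lox by simp
      then have l1: "f lo $ i \<le> f u $ i" using fmono[of lo u] u by simp
      have "\<forall>i. lo$i \<le> x$i \<and> x$i \<le> x$i" using lox by simp
      then have l2: "f u $ i \<le> f x $ i" using fmono[of u x] u by simp
      have "lo$i \<le> f lo $ i / b" using flo_ge[of i] b by (simp add: field_simps)
      then have A: "lo$i \<le> f u $ i / b" using l1 b by (meson divide_right_mono less_imp_le order_trans)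
      have "f x $ i / a \<le> x$i" using fx a by (simp add: field_simps)
      then have Bq: "f u $ i / a \<le> x$i" using l2 a by (meson divide_right_mono less_imp_le order_trans)
      show "lo$i \<le> g u$i \<and> g u$i \<le> x$i" using A Bq u[rule_format, of i] by (simp add: g_def) linarith
    qed
  qed
  then obtain z where zb: "\<forall>i. lo$i \<le> z$i \<and> z$i \<le> x$i" and gz: "g z = z" by blast
  have zc: "z \<in> pos_cone" using boxc[OF zb] .
  have fzp: "f z $ i > 0" for i using fc zc by (auto simp: pos_cone_def)
  have up: "f z $ i \<le> a * z $ i" for i
  proof -
    have "f z $ i / a \<le> z $ i" using gz[unfolded vec_eq_iff, rule_format, of i]
      by (simp add: g_def)
    then show ?thesis using a by (simp add: field_simps)
  qed
  have lw: "b * z $ i \<le> f z $ i" for i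
  proof -
    have "z $ i \<le> f z $ i / b"
    proof (rule ccontr)
      assume "\<not> ?thesis"
      then have "f z $ i / b < z$i" by simp
      moreover have "f z $ i / a \<le> f z $ i / b" using fzp[of i] a b ba by (simp add: frac_le)
      ultimately show False using gz[unfolded vec_eq_iff, rule_format, of i]
        by (simp add: g_def)
    qed
    then show ?thesis using b by (simp add: field_simps)
  qed
  show ?thesis using zc up lw by blast
qed

theorem lemma2p6:
  fixes f :: "real ^ 'n \<Rightarrow> real ^ 'n"
  assumes "\<forall>x\<in>pos_cone. f x \<in> pos_cone"
    and "order_preserving f"
    and "homogeneous f"
  shows "hilbert_disp f = ln (cw_upper f) - ln (cw_lower f)"
proof -
  note fc = assms(1) and op = assms(2) and hom = assms(3)
  define M where "M = (\<lambda>x. Max (range (\<lambda>i. f x $ i / x $ i)))"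
  define m where "m = (\<lambda>x. Min (range (\<lambda>i. f x $ i / x $ i)))"
  have fin: "finite (range (\<lambda>i. f x $ i / x $ i))" for x by simp
  have Mge: "f x $ i / x $ i \<le> M x" for x i unfolding M_def using fin by (auto intro: Max_ge)
  have mle: "m x \<le> f x $ i / x $ i" for x i unfolding m_def using fin by (auto intro: Min_le)
  have Marg: "\<exists>i. M x = f x $ i / x $ i" for x
  proof -
    have "M x \<in> range (\<lambda>i. f x $ i / x $ i)" unfolding M_def by (rule Max_in[OF fin]) simp
    then show ?thesis by auto
  qed
  have marg: "\<exists>i. m x = f x $ i / x $ i" for x
  proof -
    have "m x \<in> range (\<lambda>i. f x $ i / x $ i)" unfolding m_def by (rule Min_in[OF fin]) simp
    then show ?thesis by auto
  qed
  have mpos: "m x > 0" if "x \<in> pos_cone" for x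
  proof -
    obtain i where "m x = f x $ i / x $ i" using marg by blast
    then show ?thesis using that fc by (auto simp: pos_cone_def)
  qed
  have Mle_iff: "M x \<le> a" if "\<forall>i. f x $ i \<le> a * x $ i" "x \<in> pos_cone" for x a
  proof -
    obtain i where "M x = f x $ i / x $ i" using Marg by blast
    moreover have "x $ i > 0" using that(2) by (auto simp: pos_cone_def)
    ultimately show ?thesis using that(1) by (simp add: divide_le_eq)
  qed
  have mge_iff: "b \<le> m x" if "\<forall>i. b * x $ i \<le> f x $ i" "x \<in> pos_cone" for x b
  proof -
    obtain i where "m x = f x $ i / x $ i" using marg by blast
    moreover have "x $ i > 0" using that(2) by (auto simp: pos_cone_def)
    ultimately show ?thesis using that(1) by (simp add: le_divide_eq)
  qed
  have key: "m x \<le> M y" if x: "x \<in> pos_cone" and y: "y \<in> pos_cone" for x y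
  proof -
    have xp: "\<And>i. x$i > 0" and yp: "\<And>i. y$i > 0" using x y by (auto simp: pos_cone_def)
    define c where "c = Max (range (\<lambda>i. x$i / y$i))"
    have finc: "finite (range (\<lambda>i. x$i / y$i))" by simp
    have "c \<in> range (\<lambda>i. x$i / y$i)" unfolding c_def by (rule Max_in[OF finc]) simp
    then obtain k where ck: "c = x$k / y$k" by auto
    have c0: "c > 0" using ck xp yp by simp
    have cge: "x$i / y$i \<le> c" for i unfolding c_def using finc by (auto intro: Max_ge)
    define y' where "y' = c *\<^sub>R y"
    have y'c: "y' \<in> pos_cone" using c0 yp by (simp add: y'_def pos_cone_def)
    have xy': "\<forall>i. x$i \<le> y'$i" using cge yp by (simp add: y'_def divide_le_eq mult.commute)
    have y'k: "y'$k = x$k" using ck yp[of k] by (simp add: y'_def)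
    have fy': "f y' = c *\<^sub>R f y" using hom y c0 by (simp add: homogeneous_def y'_def)
    have "f x $ k \<le> f y' $ k" using op x y'c xy' unfolding order_preserving_def by blast
    moreover have "m x * x $ k \<le> f x $ k" using mle[of x k] xp[of k] by (simp add: le_divide_eq)
    ultimately have "m x * x$k \<le> c * f y $ k" using fy' by simp
    then have "m x * (c * y$k) \<le> c * f y $ k" using y'k by (simp add: y'_def)
    then have "m x * y$k \<le> f y $ k" using c0 by (simp add: mult.left_commute)
    then have "m x \<le> f y $ k / y $ k" using yp[of k] by (simp add: le_divide_eq)
    then show ?thesis using Mge[of y k] by linarith
  qed
  have hd: "hilbert_dist x (f x) = ln (M x) - ln (m x)" if x: "x \<in> pos_cone" for x
  proof -
    have xp: "\<And>i. x$i > 0" and fxp: "\<And>i. f x$i > 0" using x fc by (auto simp: pos_cone_def)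
    define S where "S = {(f x $ i * x $ j) / (x $ i * f x $ j) | i j. True}"
    have Seq: "S = (\<lambda>(i,j). (f x $ i * x $ j) / (x $ i * f x $ j)) ` UNIV" by (auto simp: S_def)
    have eq: "(f x $ i * x $ j) / (x $ i * f x $ j) = (f x $ i / x $ i) / (f x $ j / x $ j)" for i j
      using xp fxp by (simp add: field_simps)
    have Mx0: "M x > 0" using mpos[OF x] key[OF x x] by linarith
    have "Max S = M x / m x"
    proof (rule Max_eqI)
      show "finite S" unfolding Seq by simp
    next
      fix t assume "t \<in> S"
      then obtain i j where tt: "t = (f x $ i * x $ j) / (x $ i * f x $ j)" unfolding S_def by blast
      have t: "t = (f x $ i / x $ i) / (f x $ j / x $ j)" using tt eq[of i j] by (rule trans)
      show "t \<le> M x / m x" unfolding t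
        by (rule frac_le) (use Mge[of x i] mle[of x j] mpos[OF x] Mx0 in \<open>auto\<close>)
    next
      obtain i where i: "M x = f x $ i / x $ i" using Marg by blast
      obtain j where j: "m x = f x $ j / x $ j" using marg by blast
      have "M x / m x = (f x $ i * x $ j) / (x $ i * f x $ j)" unfolding i j by (rule eq[symmetric])
      then show "M x / m x \<in> S" unfolding S_def by blast
    qed
    moreover have "M x > 0" by (rule Mx0)
    moreover have "hilbert_dist x (f x) = ln (Max S)" unfolding hilbert_dist_def S_def by (rule refl)
    ultimately show ?thesis using mpos[OF x] by (simp add: ln_div)
  qed
  define e :: "real^'n" where "e = (\<chi> i. 1)"
  have ec: "e \<in> pos_cone" by (simp add: e_def pos_cone_def)
  have ne: "(pos_cone :: (real^'n) set) \<noteq> {}" using ec by blast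
  define r where "r = cw_upper f"
  define l where "l = cw_lower f"
  have r_def': "r = Inf (M ` pos_cone)" unfolding r_def cw_upper_def M_def by (rule refl)
  have l_def': "l = Sup (m ` pos_cone)" unfolding l_def cw_lower_def m_def by (rule refl)
  have bddM: "bdd_below (M ` pos_cone)" proof (rule bdd_belowI[of _ "m e"])
    fix t assume "t \<in> M ` pos_cone"
    then obtain y where "y \<in> pos_cone" "t = M y" by blast
    then show "m e \<le> t" using key[OF ec] by simp
  qed
  have bddm: "bdd_above (m ` pos_cone)" proof (rule bdd_aboveI[of _ "M e"])
    fix t assume "t \<in> m ` pos_cone"
    then obtain y where "y \<in> pos_cone" "t = m y" by blast
    then show "t \<le> M e" using key[OF _ ec] by simp
  qed
  have rle: "r \<le> M x" if "x \<in> pos_cone" for x unfolding r_def' by (rule cInf_lower[OF imageI[OF that] bddM])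
  have lge: "m x \<le> l" if "x \<in> pos_cone" for x unfolding l_def' by (rule cSup_upper[OF imageI[OF that] bddm])
  have mler: "m x \<le> r" if "x \<in> pos_cone" for x unfolding r_def' proof (rule cInf_greatest)
    show "M ` pos_cone \<noteq> {}" using ne by blast
  next
    fix t assume "t \<in> M ` pos_cone"
    then obtain y where "y \<in> pos_cone" "t = M y" by blast
    then show "m x \<le> t" using key[OF that] by simp
  qed
  have lr: "l \<le> r" unfolding l_def' proof (rule cSup_least)
    show "m ` pos_cone \<noteq> {}" using ne by blast
  next
    fix t assume "t \<in> m ` pos_cone"
    then obtain y where "y \<in> pos_cone" "t = m y" by blast
    then show "t \<le> r" using mler by simp
  qed
  have l0: "l > 0" using lge[OF ec] mpos[OF ec] by linarith
  have r0: "r > 0" using l0 lr by linarith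
  have disp: "hilbert_disp f = Inf ((\<lambda>x. ln (M x) - ln (m x)) ` pos_cone)"
    unfolding hilbert_disp_def by (rule arg_cong[where f=Inf], rule image_cong[OF refl], rule hd)
  have bddD: "bdd_below ((\<lambda>x. ln (M x) - ln (m x)) ` pos_cone)"
  proof (rule bdd_belowI[of _ 0])
    fix t assume "t \<in> (\<lambda>x. ln (M x) - ln (m x)) ` pos_cone"
    then obtain x where x: "x \<in> pos_cone" and t: "t = ln (M x) - ln (m x)" by auto
    show "0 \<le> t" using key[OF x x] mpos[OF x] t by simp
  qed
  have lower: "ln r - ln l \<le> hilbert_disp f"
    unfolding disp
  proof (rule cInf_greatest)
    show "(\<lambda>x. ln (M x) - ln (m x)) ` pos_cone \<noteq> {}" using ne by blast
  next
    fix t assume "t \<in> (\<lambda>x. ln (M x) - ln (m x)) ` pos_cone"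
    then obtain x where x: "x \<in> pos_cone" and t: "t = ln (M x) - ln (m x)" by auto
    have "ln r \<le> ln (M x)" using rle[OF x] r0 by simp
    moreover have "ln (m x) \<le> ln l" using lge[OF x] mpos[OF x] by simp
    ultimately show "ln r - ln l \<le> t" using t by linarith
  qed
  have upper: "hilbert_disp f \<le> ln r - ln l"
  proof (rule field_le_epsilon)
    fix \<epsilon> :: real assume \<epsilon>: "0 < \<epsilon>"
    define a where "a = r * exp (\<epsilon>/2)"
    define b where "b = l / exp (\<epsilon>/2)"
    have e1: "1 < exp (\<epsilon>/2)" using \<epsilon> by simp
    have ra: "r < a" unfolding a_def using r0 e1 by (metis mult.right_neutral mult_strict_left_mono)
    have bl: "b < l" unfolding b_def using l0 e1 by (simp add: divide_less_eq)
    have b0: "0 < b" unfolding b_def using l0 by simp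
    have ba: "b \<le> a" using ra bl lr by linarith
    obtain x where x: "x \<in> pos_cone" and Mx: "M x < a"
    proof -
      have "M ` pos_cone \<noteq> {}" using ne by blast
      then have "\<exists>t\<in>M ` pos_cone. t < a" using ra unfolding r_def' by (rule cInf_lessD)
      then show ?thesis using that by blast
    qed
    obtain y where y: "y \<in> pos_cone" and my: "b < m y"
    proof -
      have "m ` pos_cone \<noteq> {}" using ne by blast
      then have "\<exists>t\<in>m ` pos_cone. b < t" using bl unfolding l_def' by (rule less_cSupD)
      then show ?thesis using that by blast
    qed
    have fx: "\<forall>i. f x $ i \<le> a * x $ i"
    proof
      fix i have "f x $ i / x $ i \<le> a" using Mge[of x i] Mx by linarith
      then show "f x $ i \<le> a * x $ i" using x by (auto simp: pos_cone_def divide_le_eq)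
    qed
    have fy: "\<forall>i. b * y $ i \<le> f y $ i"
    proof
      fix i have "b \<le> f y $ i / y $ i" using mle[of y i] my by linarith
      then show "b * y $ i \<le> f y $ i" using y by (auto simp: pos_cone_def le_divide_eq)
    qed
    obtain z where z: "z \<in> pos_cone" and fz1: "\<forall>i. f z $ i \<le> a * z $ i"
      and fz2: "\<forall>i. b * z $ i \<le> f z $ i"
      using mid_point[OF fc op hom x y fx fy b0 ba] by blast
    have Mz: "M z \<le> a" using Mle_iff[OF fz1 z] .
    have mz: "b \<le> m z" using mge_iff[OF fz2 z] .
    have "ln (M z) \<le> ln a" using Mz mpos[OF z] key[OF z z] by simp
    moreover have "ln b \<le> ln (m z)" using mz b0 by simp
    moreover have "ln a = ln r + \<epsilon>/2" using r0 by (simp add: a_def ln_mult)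
    moreover have "ln b = ln l - \<epsilon>/2" using l0 by (simp add: b_def ln_div)
    ultimately have "ln (M z) - ln (m z) \<le> ln r - ln l + \<epsilon>" by linarith
    moreover have "hilbert_disp f \<le> ln (M z) - ln (m z)"
      unfolding disp by (rule cInf_lower[OF imageI[OF z] bddD])
    ultimately show "hilbert_disp f \<le> ln r - ln l + \<epsilon>" by linarith
  qed
  have "hilbert_disp f = ln r - ln l" using lower upper by linarith
  then show ?thesis unfolding r_def l_def .
qed

end
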